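(* Let $q$ be a large prime, $m=o(\log q)$, and $t$ a positive integer with $t^m=o(\sqrt q)$. Let $s_2,\dots,s_{m-1}$ be the elements (other than $0,1$) of a uniformly random evaluation set, i.e. distinct random elements of $\mathbb{F}_q\setminus\{0,1\}$. Define \[A_0=\tfrac{1}{1-s_2}[t]+\cdots+\tfrac{1}{1-s_{m-1}}[t],\qquad A_1=\tfrac{1}{s_2}[t]+\cdots+\tfrac{1}{s_{m-1}}[t].\] Then with high probability (as $q\to\infty$), $|A_0|=\Omega(t^{m-2})$ and $|A_1|=\Omega(t^{m-2})$.
   Context: $[t]=\{1,\dots,t\}$ viewed as a subset of $\mathbb{F}_q$; for $\lambda\in\mathbb{F}_q$, $\lambda[t]=\{\lambda a: a\in[t]\}$; for subsets $A,B$ of an abelian group, $A+B=\{a+b: a\in A,b\in B\}$. *)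

theory Defs
  imports "HOL-Analysis.Analysis" "HOL-Number_Theory.Number_Theory"
begin

text \<open>Elements of F_p are represented by their residues in {0..<p}.\<close>

definition inv_mod :: "nat \<Rightarrow> nat \<Rightarrow> nat" where
  "inv_mod p x = (THE y. y < p \<and> [x * y = 1] (mod p))"

definition dil :: "nat \<Rightarrow> nat \<Rightarrow> nat \<Rightarrow> nat set" where
  "dil p lam t = (\<lambda>a. (lam * a) mod p) ` {1..t}"

fun sumset_mod :: "nat \<Rightarrow> nat set list \<Rightarrow> nat set" where
  "sumset_mod p [] = {0}"
| "sumset_mod p (A # As) = {(a + b) mod p | a b. a \<in> A \<and> b \<in> sumset_mod p As}"

text \<open>A_0 = 1/(1-s_2)[t] + ... + 1/(1-s_{m-1})[t], with xs = [s_2,...,s_{m-1}]\<close>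
definition A0 :: "nat \<Rightarrow> nat \<Rightarrow> nat list \<Rightarrow> nat set" where
  "A0 p t xs = sumset_mod p (map (\<lambda>s. dil p (inv_mod p ((p + 1 - s) mod p)) t) xs)"

definition A1 :: "nat \<Rightarrow> nat \<Rightarrow> nat list \<Rightarrow> nat set" where
  "A1 p t xs = sumset_mod p (map (\<lambda>s. dil p (inv_mod p s) t) xs)"

text \<open>All possible choices of (s_2,...,s_{m-1}): distinct elements of F_p minus {0,1}.
  A uniformly random evaluation set is a uniformly random element of this set.\<close>
definition eval_tuples :: "nat \<Rightarrow> nat \<Rightarrow> nat list set" where
  "eval_tuples p m = {xs. length xs = m - 2 \<and> distinct xs \<and> set xs \<subseteq> {2..<p}}"

definition good_prob :: "nat \<Rightarrow> nat \<Rightarrow> nat \<Rightarrow> real \<Rightarrow> real" where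
  "good_prob p m t c =
     real (card {xs \<in> eval_tuples p m.
                 real (card (A0 p t xs)) \<ge> c * real t ^ (m - 2) \<and>
                 real (card (A1 p t xs)) \<ge> c * real t ^ (m - 2)})
     / real (card (eval_tuples p m))"

definition primes_at_top :: "nat filter" where
  "primes_at_top = inf at_top (principal {q. prime q})"

end

theory Submission
  imports Defs
begin

definition lc :: "nat list \<Rightarrow> int list \<Rightarrow> int" where
  "lc ls ds = (\<Sum>i<length ls. int (ls!i) * ds!i)"

definition Dset :: "nat \<Rightarrow> nat \<Rightarrow> int list set" where
  "Dset t k = {ds. set ds \<subseteq> {-(int t)<..<int t} \<and> length ds = k}"

definition bad :: "nat \<Rightarrow> nat \<Rightarrow> nat list \<Rightarrow> bool" where
  "bad p t ls = (\<exists>ds\<in>Dset t (length ls). (\<exists>d\<in>set ds. d \<noteq> 0) \<and> [lc ls ds = 0] (mod int p))"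

abbreviation SS where "SS p t ls \<equiv> sumset_mod p (map (\<lambda>l. dil p l t) ls)"

lemma rep:
  "b \<in> SS p t ls \<Longrightarrow> \<exists>as. length as = length ls \<and> set as \<subseteq> {1..t} \<and>
     b = (\<Sum>i<length ls. ls!i * as!i) mod p"
proof (induction ls arbitrary: b)
  case Nil
  then show ?case by simp
next
  case (Cons l ls)
  from Cons.prems obtain a b' where a: "a \<in> {1..t}" and b': "b' \<in> SS p t ls"
    and b: "b = ((l*a) mod p + b') mod p"
    by (auto simp: dil_def)
  from Cons.IH[OF b'] obtain as where as: "length as = length ls" "set as \<subseteq> {1..t}"
    "b' = (\<Sum>i<length ls. ls!i * as!i) mod p" by blast
  have "(\<Sum>i<length (l#ls). (l#ls)!i * (a#as)!i) = l*a + (\<Sum>i<length ls. ls!i * as!i)"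
    by (simp del: sum.lessThan_Suc add: sum.lessThan_Suc_shift)
  then have "b = (\<Sum>i<length (l#ls). (l#ls)!i * (a#as)!i) mod p"
    using b as(3) by (simp add: mod_add_eq)
  then show ?case using as a by (intro exI[of _ "a#as"]) auto
qed

lemma SS_Cons: "SS p t (l#ls) = (\<lambda>(a,b). ((l*a) mod p + b) mod p) ` ({1..t} \<times> SS p t ls)"
  by (auto simp: dil_def image_iff)

lemma bad_Cons: "t \<ge> 1 \<Longrightarrow> \<not> bad p t (l#ls) \<Longrightarrow> \<not> bad p t ls"
proof -
  assume t1: "t \<ge> 1" and nb: "\<not> bad p t (l#ls)"
  show "\<not> bad p t ls"
  proof
    assume "bad p t ls"
    then obtain ds where ds: "ds \<in> Dset t (length ls)" "\<exists>d\<in>set ds. d \<noteq> 0" "[lc ls ds = 0] (mod int p)"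
      unfolding bad_def by blast
    have "lc (l#ls) (0#ds) = lc ls ds"
      unfolding lc_def by (simp del: sum.lessThan_Suc add: sum.lessThan_Suc_shift)
    moreover have "0#ds \<in> Dset t (length (l#ls))" using ds(1) t1 by (auto simp: Dset_def)
    ultimately have "bad p t (l#ls)" using ds unfolding bad_def by (metis list.set_intros(2))
    with nb show False by blast
  qed
qed

lemma card_SS: "t \<ge> 1 \<Longrightarrow> \<not> bad p t ls \<Longrightarrow> card (SS p t ls) = t ^ length ls"
proof (induction ls)
  case Nil
  then show ?case by simp
next
  case (Cons l ls)
  have IH: "card (SS p t ls) = t ^ length ls" using Cons bad_Cons by metis
  have inj: "inj_on (\<lambda>(a,b). ((l*a) mod p + b) mod p) ({1..t} \<times> SS p t ls)"
  proof (rule inj_onI, clarify)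
    fix a b a' b'
    assume a: "a \<in> {1..t}" and b: "b \<in> SS p t ls" and a': "a' \<in> {1..t}" and b': "b' \<in> SS p t ls"
      and eq: "((l*a) mod p + b) mod p = ((l*a') mod p + b') mod p"
    from rep[OF b] obtain as where as: "length as = length ls" "set as \<subseteq> {1..t}"
      "b = (\<Sum>i<length ls. ls!i * as!i) mod p" by blast
    from rep[OF b'] obtain as' where as': "length as' = length ls" "set as' \<subseteq> {1..t}"
      "b' = (\<Sum>i<length ls. ls!i * as'!i) mod p" by blast
    let ?S = "\<Sum>i<length ls. ls!i * as!i"
    let ?S' = "\<Sum>i<length ls. ls!i * as'!i"
    have "(l*a + ?S) mod p = (l*a' + ?S') mod p"
      using eq as(3) as'(3) by (metis mod_add_eq mod_mod_trivial)
    then have c: "[int (l*a + ?S) = int (l*a' + ?S')] (mod int p)"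
      using cong_int_iff unfolding cong_def by blast
    define ds where "ds = (int a - int a') # map (\<lambda>i. int (as!i) - int (as'!i)) [0..<length ls]"
    have "lc (l#ls) ds = int l * (int a - int a') + (\<Sum>i<length ls. int (ls!i) * (int (as!i) - int (as'!i)))"
      unfolding lc_def ds_def by (simp del: sum.lessThan_Suc add: sum.lessThan_Suc_shift)
    also have "\<dots> = int (l*a + ?S) - int (l*a' + ?S')"
      by (simp add: algebra_simps sum_subtractf of_nat_sum)
    finally have "[lc (l#ls) ds = 0] (mod int p)"
      using c by (simp add: cong_iff_dvd_diff cong_sym_eq)
    moreover have "ds \<in> Dset t (length (l#ls))"
    proof -
      have "\<And>i. i < length ls \<Longrightarrow> as!i \<in> {1..t} \<and> as'!i \<in> {1..t}"
        using as as' by (metis nth_mem subsetD)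
      then show ?thesis using a a' unfolding ds_def Dset_def by force
    qed
    ultimately have z: "\<forall>d\<in>set ds. d = 0" using Cons.prems unfolding bad_def by blast
    then have "a = a'" unfolding ds_def by simp
    moreover have "\<And>i. i < length ls \<Longrightarrow> as!i = as'!i" using z unfolding ds_def by auto
    then have "?S = ?S'" by (intro sum.cong) auto
    ultimately show "a = a' \<and> b = b'" using as as' by simp
  qed
  have "card (SS p t (l#ls)) = card ({1..t} \<times> SS p t ls)"
    unfolding SS_Cons by (rule card_image[OF inj])
  then show ?case by (simp add: card_cartesian_product IH)
qed


definition El :: "nat \<Rightarrow> nat \<Rightarrow> nat list set" where
  "El p k = {xs. length xs = k \<and> distinct xs \<and> set xs \<subseteq> {2..<p}}"

lemma finite_El: "finite (El p k)"
  unfolding El_def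
  by (rule finite_subset[OF _ finite_lists_length_eq[of "{2..<p}" k]]) auto

lemma card_El: "1 \<le> k \<Longrightarrow> k \<le> p - 2 \<Longrightarrow> card (El p k) = card (El p (k-1)) * (p - 1 - k)"
proof -
  assume k: "1 \<le> k" "k \<le> p - 2"
  have "card (El p k) = \<Prod>{p - 2 - k + 1 .. p - 2}"
    unfolding El_def using card_lists_distinct_length_eq[of "{2..<p}" k] k by simp
  also have "\<dots> = (p - 2 - k + 1) * \<Prod>{Suc (p - 2 - k + 1) .. p - 2}"
    using k by (intro prod.atLeast_Suc_atMost) auto
  also have "\<Prod>{Suc (p - 2 - k + 1) .. p - 2} = card (El p (k-1))"
  proof -
    have "card (El p (k-1)) = \<Prod>{p - 2 - (k-1) + 1 .. p - 2}"
      unfolding El_def using card_lists_distinct_length_eq[of "{2..<p}" "k-1"] k by simp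
    moreover have "p - 2 - (k-1) + 1 = Suc (p - 2 - k + 1)" using k by simp
    ultimately show ?thesis by metis
  qed
  moreover have e: "p - Suc k = Suc (p - Suc (Suc k))" using k by arith
  ultimately show ?thesis using k by (simp add: mult.commute e)
qed

lemma card_Dset: "t \<ge> 1 \<Longrightarrow> card (Dset t k) = (2*t - 1)^k"
proof -
  assume t: "t \<ge> 1"
  have "card (Dset t k) = card {-(int t)<..<int t} ^ k"
    unfolding Dset_def by (rule card_lists_length_eq) simp
  moreover have "card {-(int t)<..<int t} = 2*t - 1" using t by simp
  ultimately show ?thesis by simp
qed

lemma finite_Dset: "finite (Dset t k)"
  unfolding Dset_def by (rule finite_lists_length_eq) simp

definition rem :: "nat \<Rightarrow> 'a list \<Rightarrow> 'a list" where
  "rem j xs = take j xs @ drop (Suc j) xs"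

lemma rem_nth_lt: "j < length xs \<Longrightarrow> i < j \<Longrightarrow> rem j xs ! i = xs ! i"
  unfolding rem_def by (simp add: nth_append)

lemma rem_nth_gt: "j < length xs \<Longrightarrow> j < i \<Longrightarrow> i < length xs \<Longrightarrow> rem j xs ! (i - 1) = xs ! i"
proof -
  assume a: "j < length xs" "j < i" "i < length xs"
  have l: "length (take j xs) = j" using a by simp
  have n: "\<not> (i - 1 < j)" using a by simp
  have "rem j xs ! (i - 1) = drop (Suc j) xs ! (i - 1 - j)"
    unfolding rem_def nth_append l using n by (simp only: if_False)
  also have "\<dots> = xs ! (Suc j + (i - 1 - j))" using a by simp
  also have "Suc j + (i - 1 - j) = i" using a by simp
  finally show ?thesis .
qed

lemma rem_El: "j < k \<Longrightarrow> xs \<in> El p k \<Longrightarrow> rem j xs \<in> El p (k-1)"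
proof -
  assume j: "j < k" and xs: "xs \<in> El p k"
  have "distinct (take j xs @ drop (Suc j) xs)"
    using xs set_take_disj_set_drop_if_distinct[of xs j "Suc j"]
    by (auto simp: El_def distinct_take distinct_drop)
  moreover have "set (take j xs @ drop (Suc j) xs) \<subseteq> {2..<p}"
    using xs by (auto simp: El_def dest: in_set_takeD in_set_dropD)
  ultimately show ?thesis using xs j unfolding El_def rem_def by auto
qed

lemma count_one:
  assumes p: "prime p" and tp: "t \<le> p" and inj: "inj_on (\<lambda>s. g s mod p) {2..<p}"
    and ds: "ds \<in> Dset t k" and j: "j < k" and dj: "ds!j \<noteq> 0"
  shows "card {xs \<in> El p k. [lc (map g xs) ds = 0] (mod int p)} \<le> card (El p (k-1))"
proof (rule card_inj_on_le[of "rem j"])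
  show "finite (El p (k-1))" by (rule finite_El)
  show "rem j ` {xs \<in> El p k. [lc (map g xs) ds = 0] (mod int p)} \<subseteq> El p (k - 1)"
    using rem_El[OF j] by auto
  show "inj_on (rem j) {xs \<in> El p k. [lc (map g xs) ds = 0] (mod int p)}"
  proof (rule inj_onI)
    fix xs ys
    assume xs: "xs \<in> {xs \<in> El p k. [lc (map g xs) ds = 0] (mod int p)}"
      and ys: "ys \<in> {xs \<in> El p k. [lc (map g xs) ds = 0] (mod int p)}"
      and eq: "rem j xs = rem j ys"
    have lx: "length xs = k" and ly: "length ys = k" using xs ys by (auto simp: El_def)
    have off: "xs!i = ys!i" if "i < k" "i \<noteq> j" for i
    proof (cases "i < j")
      case True
      then show ?thesis using rem_nth_lt[of j xs i] rem_nth_lt[of j ys i] eq lx ly j by simp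
    next
      case False
      then have "j < i" using that by simp
      then show ?thesis using rem_nth_gt[of j xs i] rem_nth_gt[of j ys i] eq lx ly j that by simp
    qed
    define R where "R zs = (\<Sum>i\<in>{..<k} - {j}. int (g (zs!i)) * ds!i)" for zs
    have split: "lc (map g zs) ds = int (g (zs!j)) * ds!j + R zs" if "length zs = k" for zs
      unfolding lc_def R_def using that j by (simp add: sum.remove[of "{..<k}" j])
    have "R xs = R ys" unfolding R_def using off by (intro sum.cong) auto
    then have "[int (g (xs!j)) * ds!j = int (g (ys!j)) * ds!j] (mod int p)"
    proof -
      have "int p dvd lc (map g xs) ds - lc (map g ys) ds"
        using xs ys by (intro dvd_diff) (auto simp: cong_0_iff)
      then show ?thesis using split[OF lx] split[OF ly] \<open>R xs = R ys\<close>
        by (simp add: cong_iff_dvd_diff)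
    qed
    moreover have "coprime (ds!j) (int p)"
    proof -
      have "ds!j \<in> {-(int t)<..<int t}" using ds j nth_mem unfolding Dset_def by blast
      then have "\<bar>ds!j\<bar> < int p" using tp by auto
      then have "\<not> int p dvd ds!j" using dj dvd_imp_le_int[of "ds!j" "int p"] by auto
      moreover have "prime (int p)" using p by simp
      ultimately show ?thesis by (simp add: prime_imp_coprime coprime_commute)
    qed
    ultimately have "[int (g (xs!j)) = int (g (ys!j))] (mod int p)"
      using cong_mult_rcancel by blast
    then have gm: "g (xs!j) mod p = g (ys!j) mod p" using cong_int_iff unfolding cong_def by blast
    have sx: "set xs \<subseteq> {2..<p}" "set ys \<subseteq> {2..<p}" using xs ys by (auto simp: El_def)
    have "xs!j \<in> set xs" "ys!j \<in> set ys" using lx ly j by simp_all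
    then have mx: "xs!j \<in> {2..<p}" and my: "ys!j \<in> {2..<p}" using sx by blast+
    have xj: "xs!j = ys!j" by (rule inj_onD[OF inj gm mx my])
    show "xs = ys"
    proof (rule nth_equalityI)
      show "length xs = length ys" using lx ly by simp
      fix i assume "i < length xs"
      then show "xs!i = ys!i" using off xj lx by (cases "i = j") auto
    qed
  qed
qed


lemma count_bad:
  assumes p: "prime p" and tp: "t \<le> p" and t1: "t \<ge> 1" and inj: "inj_on (\<lambda>s. g s mod p) {2..<p}"
    and k: "1 \<le> k"
  shows "card {xs \<in> El p k. bad p t (map g xs)} \<le> (2*t-1)^k * card (El p (k-1))"
proof -
  let ?B = "\<lambda>ds. {xs \<in> El p k. (\<exists>d\<in>set ds. d \<noteq> 0) \<and> [lc (map g xs) ds = 0] (mod int p)}"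
  have sub: "{xs \<in> El p k. bad p t (map g xs)} \<subseteq> (\<Union>ds\<in>Dset t k. ?B ds)"
    unfolding bad_def by (auto simp: El_def)
  have fin: "finite (\<Union>ds\<in>Dset t k. ?B ds)"
    using finite_El by (intro finite_UN_I finite_Dset) auto
  have each: "card (?B ds) \<le> card (El p (k-1))" if ds: "ds \<in> Dset t k" for ds
  proof (cases "\<exists>d\<in>set ds. d \<noteq> 0")
    case True
    then obtain j where j: "j < length ds" "ds!j \<noteq> 0" by (auto simp: in_set_conv_nth)
    have lk: "length ds = k" using ds by (simp add: Dset_def)
    have "?B ds \<subseteq> {xs \<in> El p k. [lc (map g xs) ds = 0] (mod int p)}" by auto
    then have "card (?B ds) \<le> card {xs \<in> El p k. [lc (map g xs) ds = 0] (mod int p)}"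
      by (intro card_mono) (auto intro: finite_subset[OF _ finite_El])
    also have "\<dots> \<le> card (El p (k-1))"
      using count_one[OF p tp inj ds, of j] j lk by simp
    finally show ?thesis .
  next
    case False
    then show ?thesis by simp
  qed
  have "card {xs \<in> El p k. bad p t (map g xs)} \<le> card (\<Union>ds\<in>Dset t k. ?B ds)"
    by (rule card_mono[OF fin sub])
  also have "\<dots> \<le> (\<Sum>ds\<in>Dset t k. card (?B ds))" by (rule card_UN_le[OF finite_Dset])
  also have "\<dots> \<le> (\<Sum>ds\<in>Dset t k. card (El p (k-1)))" by (rule sum_mono) (rule each)
  also have "\<dots> = (2*t-1)^k * card (El p (k-1))" using card_Dset[OF t1] by simp
  finally show ?thesis .
qed

lemma inv_mod_prop:
  assumes p: "prime p" and x: "x mod p \<noteq> 0"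
  shows "inv_mod p x < p \<and> [x * inv_mod p x = 1] (mod p)"
proof -
  have nd: "\<not> p dvd x" using x by (simp add: dvd_eq_mod_eq_0)
  have "coprime p x" by (rule prime_imp_coprime[OF p nd])
  then have cop: "coprime x p" by (simp add: coprime_commute)
  from cong_solve_coprime_nat[OF cop] obtain y where y: "[x * y = 1] (mod p)" by auto
  have p0: "p > 0" using p by (simp add: prime_gt_0_nat)
  have ex1: "y mod p < p" using p0 by simp
  have ex2: "[x * (y mod p) = 1] (mod p)"
    using y unfolding cong_def by (simp add: mod_mult_right_eq)
  have uniq: "z = y mod p" if z1: "z < p" and z2: "[x * z = 1] (mod p)" for z
  proof -
    have "[x * z = x * (y mod p)] (mod p)" by (rule cong_trans[OF z2 cong_sym[OF ex2]])
    then have "[z = y mod p] (mod p)" by (simp only: cong_mult_lcancel_nat[OF cop])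
    then show ?thesis using cong_less_modulus_unique_nat z1 ex1 by blast
  qed
  have "inv_mod p x = y mod p"
    unfolding inv_mod_def
  proof (rule the_equality)
    show "y mod p < p \<and> [x * (y mod p) = 1] (mod p)" using ex1 ex2 by blast
    fix z assume "z < p \<and> [x * z = 1] (mod p)"
    then show "z = y mod p" using uniq by blast
  qed
  then show ?thesis using ex1 ex2 by simp
qed

lemma inv_mod_inj:
  assumes p: "prime p" and x: "x \<in> {1..<p}" and x': "x' \<in> {1..<p}"
    and eq: "inv_mod p x = inv_mod p x'"
  shows "x = x'"
proof -
  have n1: "x mod p \<noteq> 0" using x by simp
  have n2: "x' mod p \<noteq> 0" using x' by simp
  have a1: "[x * inv_mod p x = 1] (mod p)" using inv_mod_prop[OF p n1] by blast
  have a2: "[x' * inv_mod p x = 1] (mod p)" using inv_mod_prop[OF p n2] eq by simp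
  let ?y = "inv_mod p x"
  have c0: "x * (?y * x') = x' * (x * ?y)" by (simp only: ac_simps)
  have c1: "[x * (x' * ?y) = x * 1] (mod p)" by (rule cong_scalar_left[OF a2])
  have c2: "[x' * (x * ?y) = x' * 1] (mod p)" by (rule cong_scalar_left[OF a1])
  have "x * (x' * ?y) = x' * (x * ?y)" by (simp only: ac_simps)
  then have "[x * 1 = x' * 1] (mod p)" using c1 c2 by (metis cong_sym cong_trans)
  then have "[x = x'] (mod p)" by simp
  then show ?thesis using x x' cong_less_modulus_unique_nat by simp
qed

lemma inj_g1: "prime p \<Longrightarrow> inj_on (\<lambda>s. inv_mod p s mod p) {2..<p}"
proof (rule inj_onI)
  fix x y assume p: "prime p" and x: "x \<in> {2..<p}" and y: "y \<in> {2..<p}"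
    and e: "inv_mod p x mod p = inv_mod p y mod p"
  have "inv_mod p x < p" "inv_mod p y < p" using inv_mod_prop[OF p] x y by auto
  then have "inv_mod p x = inv_mod p y" using e by simp
  then show "x = y" using inv_mod_inj[OF p] x y by auto
qed

lemma inj_g0: "prime p \<Longrightarrow> inj_on (\<lambda>s. inv_mod p ((p + 1 - s) mod p) mod p) {2..<p}"
proof (rule inj_onI)
  fix x y assume p: "prime p" and x: "x \<in> {2..<p}" and y: "y \<in> {2..<p}"
    and e: "inv_mod p ((p + 1 - x) mod p) mod p = inv_mod p ((p + 1 - y) mod p) mod p"
  have mx: "(p + 1 - x) mod p = p + 1 - x" and my: "(p + 1 - y) mod p = p + 1 - y" using x y by auto
  have "p + 1 - x \<in> {2..<p}" "p + 1 - y \<in> {2..<p}" using x y by auto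
  then have "p + 1 - x = p + 1 - y" using inj_g1[OF p] e unfolding mx my by (auto dest: inj_onD)
  then show "x = y" using x y by auto
qed


lemma bad_Nil: "\<not> bad p t []"
  unfolding bad_def Dset_def by auto

lemma ratio_bound:
  assumes p: "prime p" and tp: "t \<le> p" and t1: "t \<ge> 1" and inj: "inj_on (\<lambda>s. g s mod p) {2..<p}"
    and mp: "m \<le> p" and m2: "m \<ge> 2"
  shows "real (card {xs \<in> El p (m-2). bad p t (map g xs)}) / real (card (El p (m-2)))
          \<le> real ((2*t-1)^(m-2)) / (real p + 1 - real m)"
proof (cases "m = 2")
  case True
  have e: "{xs \<in> El p (m-2). bad p t (map g xs)} = {}" using bad_Nil True by (auto simp: El_def)
  show ?thesis unfolding e using True mp by simp
next
  case False
  define k where "k = m - 2"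
  have k: "1 \<le> k" "k \<le> p - 2" using False m2 mp unfolding k_def by auto
  have cE: "card (El p k) = card (El p (k-1)) * (p - 1 - k)" by (rule card_El[OF k])
  have pk: "real (p - 1 - k) = real p + 1 - real m" using k m2 unfolding k_def by auto
  have pos: "p - 1 - k > 0" using k by auto
  have "card {xs \<in> El p k. bad p t (map g xs)} \<le> (2*t-1)^k * card (El p (k-1))"
    by (rule count_bad[OF p tp t1 inj k(1)])
  then have "real (card {xs \<in> El p k. bad p t (map g xs)}) \<le> real ((2*t-1)^k) * real (card (El p (k-1)))"
    by (metis of_nat_le_iff of_nat_mult)
  moreover have "card (El p (k-1)) > 0"
  proof -
    have "[2..<k+1] \<in> El p (k-1)" using k unfolding El_def by auto
    then show ?thesis using finite_El card_gt_0_iff by blast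
  qed
  ultimately have Bl: "real (card {xs \<in> El p k. bad p t (map g xs)}) \<le> real ((2*t-1)^k) * real (card (El p (k-1)))"
    and Cp: "real (card (El p (k-1))) > 0" by simp_all
  have Dp: "real (p - 1 - k) > 0" using pos by simp
  have "real (card {xs \<in> El p k. bad p t (map g xs)}) / (real (card (El p (k-1))) * real (p - 1 - k))
      \<le> (real ((2*t-1)^k) * real (card (El p (k-1)))) / (real (card (El p (k-1))) * real (p - 1 - k))"
    using Bl Cp Dp by (intro divide_right_mono) auto
  also have "\<dots> = real ((2*t-1)^k) / real (p - 1 - k)" using Cp by simp
  finally show ?thesis unfolding k_def[symmetric] cE pk[symmetric] of_nat_mult .
qed

lemma prob_bound:
  assumes p: "prime p" and tp: "t \<le> p" and t1: "t \<ge> 1" and mp: "m \<le> p" and m2: "m \<ge> 2"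
  shows "1 - 2 * (real ((2*t-1)^(m-2)) / (real p + 1 - real m)) \<le> good_prob p m t 1
         \<and> good_prob p m t 1 \<le> 1"
proof -
  define k where "k = m - 2"
  define g0 where "g0 s = inv_mod p ((p + 1 - s) mod p)" for s
  define g1 where "g1 s = inv_mod p s" for s
  have E: "eval_tuples p m = El p k" unfolding eval_tuples_def El_def k_def by simp
  define G where "G = {xs \<in> El p k. real (card (A0 p t xs)) \<ge> 1 * real t ^ k \<and>
                 real (card (A1 p t xs)) \<ge> 1 * real t ^ k}"
  have gp: "good_prob p m t 1 = real (card G) / real (card (El p k))"
    unfolding good_prob_def G_def E k_def ..
  define B0 where "B0 = {xs \<in> El p k. bad p t (map g0 xs)}"
  define B1 where "B1 = {xs \<in> El p k. bad p t (map g1 xs)}"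
  have A0: "A0 p t xs = SS p t (map g0 xs)" for xs unfolding A0_def g0_def by (simp add: o_def)
  have A1: "A1 p t xs = SS p t (map g1 xs)" for xs unfolding A1_def g1_def by (simp add: o_def)
  have sub: "El p k - (B0 \<union> B1) \<subseteq> G"
  proof
    fix xs assume xs: "xs \<in> El p k - (B0 \<union> B1)"
    then have l: "length xs = k" by (simp add: El_def)
    have "card (A0 p t xs) = t ^ k" unfolding A0 using card_SS[OF t1, where ls = "map g0 xs" and p = p] xs l
      by (simp add: B0_def)
    moreover have "card (A1 p t xs) = t ^ k" unfolding A1 using card_SS[OF t1, where ls = "map g1 xs" and p = p] xs l
      by (simp add: B1_def)
    ultimately show "xs \<in> G" using xs unfolding G_def by simp
  qed
  have GE: "G \<subseteq> El p k" unfolding G_def by auto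
  have cEpos: "card (El p k) > 0"
  proof -
    have "[2..<k+2] \<in> El p k" using mp unfolding El_def k_def by auto
    then show ?thesis using finite_El card_gt_0_iff by blast
  qed
  have fin: "finite (El p k)" by (rule finite_El)
  have "card (El p k) \<le> card (El p k - (B0 \<union> B1)) + card (B0 \<union> B1)"
  proof -
    have "card (El p k) \<le> card ((El p k - (B0 \<union> B1)) \<union> (B0 \<union> B1))"
      by (rule card_mono) (auto simp: B0_def B1_def intro: finite_subset[OF _ fin])
    also have "\<dots> \<le> card (El p k - (B0 \<union> B1)) + card (B0 \<union> B1)" by (rule card_Un_le)
    finally show ?thesis .
  qed
  moreover have "card (B0 \<union> B1) \<le> card B0 + card B1" by (rule card_Un_le)
  moreover have "card (El p k - (B0 \<union> B1)) \<le> card G" by (rule card_mono[OF finite_subset[OF GE fin] sub])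
  ultimately have "card (El p k) \<le> card G + card B0 + card B1" by linarith
  then have c1: "real (card (El p k)) \<le> real (card G) + real (card B0) + real (card B1)"
    by (metis of_nat_add of_nat_le_iff)
  have r0: "real (card B0) / real (card (El p k)) \<le> real ((2*t-1)^(m-2)) / (real p + 1 - real m)"
    unfolding B0_def k_def
    by (rule ratio_bound[OF p tp t1 _ mp m2]) (use inj_g0[OF p] in \<open>simp add: g0_def\<close>)
  have r1: "real (card B1) / real (card (El p k)) \<le> real ((2*t-1)^(m-2)) / (real p + 1 - real m)"
    unfolding B1_def k_def
    by (rule ratio_bound[OF p tp t1 _ mp m2]) (use inj_g1[OF p] in \<open>simp add: g1_def\<close>)
  have Ep: "real (card (El p k)) > 0" using cEpos by simp
  have "real (card (El p k)) / real (card (El p k))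
        \<le> (real (card G) + real (card B0) + real (card B1)) / real (card (El p k))"
    by (rule divide_right_mono[OF c1]) simp
  then have "1 \<le> (real (card G) + real (card B0) + real (card B1)) / real (card (El p k))"
    using Ep by simp
  then have "1 \<le> real (card G) / real (card (El p k)) + real (card B0) / real (card (El p k))
            + real (card B1) / real (card (El p k))"
    by (simp only: add_divide_distrib)
  then have lo: "1 - 2 * (real ((2*t-1)^(m-2)) / (real p + 1 - real m)) \<le> good_prob p m t 1"
    unfolding gp using r0 r1 by linarith
  have "card G \<le> card (El p k)" by (rule card_mono[OF fin GE])
  then have "real (card G) \<le> real (card (El p k))" by (simp only: of_nat_le_iff)
  then have "good_prob p m t 1 \<le> 1" unfolding gp using Ep by (simp add: divide_le_eq_1)
  with lo show ?thesis by blast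
qed


lemma key_ineq:
  fixes q t m :: nat
  assumes q: "q \<ge> 4" and t1: "t \<ge> 1" and m2: "m \<ge> 2"
    and h2: "2 ^ m \<le> sqrt (real q)" and ht: "real t ^ m < sqrt (real q)"
  shows "t \<le> q" "m \<le> q"
    "2 * (real ((2*t-1)^(m-2)) / (real q + 1 - real m)) \<le> 4 * (real t ^ m / sqrt (real q))"
proof -
  have sq: "sqrt (real q) \<le> real q / 2"
  proof -
    have "sqrt (real q) * sqrt (real q) = real q" by simp
    moreover have "2 \<le> sqrt (real q)" using q real_sqrt_le_mono[of 4 "real q"] by simp
    then have "2 * sqrt (real q) \<le> sqrt (real q) * sqrt (real q)"
      by (intro mult_right_mono) auto
    ultimately show ?thesis by linarith
  qed
  have "real t \<le> real t ^ m" using t1 m2 by (simp add: self_le_power)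
  then show "t \<le> q" using ht sq by linarith
  have "real m < real ((2::nat) ^ m)" using less_exp[of m] by (simp only: of_nat_less_iff)
  then have mm: "real m \<le> 2 ^ m" by simp
  then show "m \<le> q" using h2 sq by linarith
  have den: "real q + 1 - real m \<ge> real q / 2" using mm h2 sq by linarith
  have "(2*t-1)^(m-2) \<le> (2*t)^(m-2)" by (rule power_mono) auto
  also have "\<dots> \<le> (2*t)^m" using t1 by (intro power_increasing) auto
  finally have "real ((2*t-1)^(m-2)) \<le> real ((2*t)^m)" by (simp only: of_nat_le_iff)
  also have "real ((2*t)^m) = 2^m * real t ^ m" by (simp add: power_mult_distrib)
  finally have "real ((2*t-1)^(m-2)) \<le> 2^m * real t ^ m" .
  also have "\<dots> \<le> sqrt (real q) * real t ^ m" using h2 by (intro mult_right_mono) auto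
  finally have num: "real ((2*t-1)^(m-2)) \<le> sqrt (real q) * real t ^ m" .
  have qpos: "real q > 0" using q by simp
  have "real ((2*t-1)^(m-2)) / (real q + 1 - real m) \<le> (sqrt (real q) * real t ^ m) / (real q / 2)"
    using num den qpos by (intro frac_le) auto
  also have "\<dots> = 2 * (real t ^ m / sqrt (real q))"
  proof -
    have "real q = sqrt (real q) * sqrt (real q)" by simp
    moreover have "sqrt (real q) > 0" using qpos by simp
    ultimately show ?thesis by (simp add: field_simps)
  qed
  finally show "2 * (real ((2*t-1)^(m-2)) / (real q + 1 - real m)) \<le> 4 * (real t ^ m / sqrt (real q))"
    by linarith
qed


theorem mainTheorem8:
  fixes m t :: "nat \<Rightarrow> nat"
  assumes m_ge: "\<And>q. m q \<ge> 2"
    and t_pos: "\<And>q. t q \<ge> 1"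
    and m_small: "((\<lambda>q. real (m q) / ln (real q)) \<longlongrightarrow> 0) primes_at_top"
    and t_small: "((\<lambda>q. real (t q) ^ m q / sqrt (real q)) \<longlongrightarrow> 0) primes_at_top"
  shows "\<exists>c > 0. ((\<lambda>q. good_prob q (m q) (t q) c) \<longlongrightarrow> 1) primes_at_top"
proof (intro exI[of _ 1] conjI)
  show "(1::real) > 0" by simp
  have le: "primes_at_top \<le> at_top" unfolding primes_at_top_def by (rule inf_le1)
  have ev_q: "\<forall>\<^sub>F q in primes_at_top. (4::nat) \<le> q"
    by (rule filter_leD[OF le]) (rule eventually_ge_at_top)
  have ev_p: "\<forall>\<^sub>F q in primes_at_top. prime q"
    unfolding primes_at_top_def eventually_inf_principal by simp
  have ev_m: "\<forall>\<^sub>F q in primes_at_top. real (m q) / ln (real q) < 1 / (2 * ln 2)"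
    by (rule order_tendstoD(2)[OF m_small]) simp
  have ev_t: "\<forall>\<^sub>F q in primes_at_top. real (t q) ^ m q / sqrt (real q) < 1"
    by (rule order_tendstoD(2)[OF t_small]) simp
  have ev: "\<forall>\<^sub>F q in primes_at_top.
      1 - 4 * (real (t q) ^ m q / sqrt (real q)) \<le> good_prob q (m q) (t q) 1
      \<and> good_prob q (m q) (t q) 1 \<le> 1"
    using ev_q ev_p ev_m ev_t
  proof eventually_elim
    case (elim q)
    have lnq: "ln (real q) > 0" using elim(1) by simp
    have "real (m q) < ln (real q) / (2 * ln 2)"
      using elim(3) lnq by (simp add: divide_simps)
    then have "real (m q) * ln 2 < ln (real q) / 2" by (simp add: field_simps)
    then have "exp (real (m q) * ln 2) \<le> exp (ln (real q) / 2)" by simp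
    moreover have "exp (real (m q) * ln 2) = 2 ^ m q"
      by (metis exp_ln exp_of_nat_mult zero_less_numeral)
    moreover have "exp (ln (real q) / 2) = sqrt (real q)"
    proof -
      have "real q powr (1/2) = sqrt (real q)" by (rule powr_half_sqrt) simp
      then show ?thesis using elim(1) by (simp add: powr_def)
    qed
    ultimately have h2: "2 ^ m q \<le> sqrt (real q)" by simp
    have "sqrt (real q) > 0" using elim(1) by simp
    then have ht: "real (t q) ^ m q < sqrt (real q)" using elim(4) by (simp add: divide_simps)
    note K = key_ineq[OF elim(1) t_pos m_ge h2 ht]
    note P = prob_bound[OF elim(2) K(1) t_pos K(2) m_ge]
    show ?case using P K(3) by linarith
  qed
  have lim: "((\<lambda>q. 1 - 4 * (real (t q) ^ m q / sqrt (real q))) \<longlongrightarrow> 1 - 4 * 0) primes_at_top"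
    by (intro tendsto_intros t_small)
  show "((\<lambda>q. good_prob q (m q) (t q) 1) \<longlongrightarrow> 1) primes_at_top"
  proof (rule tendsto_sandwich[of "\<lambda>q. 1 - 4 * (real (t q) ^ m q / sqrt (real q))" _ _ "\<lambda>q. 1"])
    show "\<forall>\<^sub>F q in primes_at_top. 1 - 4 * (real (t q) ^ m q / sqrt (real q)) \<le> good_prob q (m q) (t q) 1"
      using ev by (rule eventually_mono) blast
    show "\<forall>\<^sub>F q in primes_at_top. good_prob q (m q) (t q) 1 \<le> 1"
      using ev by (rule eventually_mono) blast
    show "((\<lambda>q. 1 - 4 * (real (t q) ^ m q / sqrt (real q))) \<longlongrightarrow> 1) primes_at_top"
      using lim by simp
    show "((\<lambda>q. 1::real) \<longlongrightarrow> 1) primes_at_top" by simp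
  qed
qed

end
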